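(* Let $I$ and $J$ be compositions of $n$, and let $M(I,J)$ be the set of matrices $M$ with nonnegative integer entries and no zero row such that $\mathrm{WC}(w(M))=I$ and the vector of column sums of $M$ is $J$. Then the coefficient $C_I^J(q)$ of $\Psi_I$ in $S^J(q)$ is \[ C_I^J(q)=\sum_{M\in M(I,J)}q^{\mathrm{sinv}(w(M))}. \]
   Context: For a nonnegative integer matrix $M=(m_{ij})$, $w(M)$ is the word obtained by reading the entries columnwise (columns left to right, each column top to bottom) and writing the row index $i$ repeated $m_{ij}$ times for each entry $m_{ij}$. A composition of $n$ is a sequence of positive integers with sum $n$. Over $\mathbb K(q)$ ($\mathrm{char}\,\mathbb K=0$): packed words are words with letter set $\{1,\dots,m\}$ for some $m$; $\mathrm{pack}$ replaces the $t$-th smallest letter by $t$. For a packed word $w=w_1\cdots w_n$: $\mathrm{WC}(w)$ is the composition of $n$ whose descent set (partial sums other than $n$) is the set of positions $p<n$ with $w_p$ not occurring in $w_{p+1}\cdots w_n$; $\mathrm{sinv}(w)=\#\{i<j:w_i>w_j,\ w_j\text{ not occurring in }w_{j+1}\cdots w_n\}$. $\mathbf{WQSym}$ has basis $\mathbf M_u$ with $\mathbf M_{u'}\mathbf M_{u''}=\sum\mathbf M_u$ over packed $u=v\cdot w$ with $\mathrm{pack}(v)=u'$, $\mathrm{pack}(w)=u''$; $\mathbf M_{u'}\star_q\mathbf M_{u''}=\sum q^{\mathrm{sinv}(u)-\mathrm{sinv}(u')-\mathrm{sinv}(u'')}\mathbf M_u$ (associative). $\mathbf{Sym}$ is the quotient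 by the span of $\mathbf M_u-\mathbf M_v$ with $\mathrm{WC}(u)=\mathrm{WC}(v)$, $\zeta$ the quotient map, $\Psi_I=\zeta(\mathbf M_u)$ for $\mathrm{WC}(u)=I$ (a basis). $\tilde S_m=\sum\mathbf M_u$ over nondecreasing packed $u$ of length $m$; for $J=(j_1,\dots,j_l)$, $S^J(q)=\zeta(\tilde S_{j_1}\star_q\cdots\star_q\tilde S_{j_l})$. *)

theory Defs
  imports Main "HOL-Computational_Algebra.Polynomial" "HOL-Computational_Algebra.Fraction_Field"
begin

(* Words are nat lists; positions 0-based internally. *)

definition is_composition :: "nat \<Rightarrow> nat list \<Rightarrow> bool" where
  "is_composition n I \<longleftrightarrow> (\<forall>x\<in>set I. 0 < x) \<and> sum_list I = n"

definition packed :: "nat list \<Rightarrow> bool" where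
  "packed w \<longleftrightarrow> set w = {1..card (set w)}"

definition pack :: "nat list \<Rightarrow> nat list" where
  "pack w = map (\<lambda>x. card {y \<in> set w. y \<le> x}) w"

(* composition of n with given descent set D \<subseteq> {1..n-1} *)
definition comp_of_descents :: "nat \<Rightarrow> nat set \<Rightarrow> nat list" where
  "comp_of_descents n D = (if n = 0 then [] else
     (let ps = sorted_list_of_set (insert n D) in map2 (-) ps (0 # ps)))"

(* descent set of WC(w): 1-based positions p<n with w_p not occurring in w_{p+1}...w_n *)
definition WC_descents :: "nat list \<Rightarrow> nat set" where
  "WC_descents w = {p. 1 \<le> p \<and> p < length w \<and> w ! (p - 1) \<notin> set (drop p w)}"

definition WC :: "nat list \<Rightarrow> nat list" where
  "WC w = comp_of_descents (length w) (WC_descents w)"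

definition sinv :: "nat list \<Rightarrow> nat" where
  "sinv w = card {(i, j). i < j \<and> j < length w \<and> w ! i > w ! j \<and> w ! j \<notin> set (drop (Suc j) w)}"

(* Elements of WQSym: coefficient functions on packed words, F u = coefficient of M_u *)
type_synonym 'f wqsym = "nat list \<Rightarrow> 'f"

definition wq_unit :: "'f::field wqsym" where
  "wq_unit u = (if u = [] then 1 else 0)"

(* bilinear extension of M_u' \<star>_q M_u'' *)
definition qprod :: "'f::field \<Rightarrow> 'f wqsym \<Rightarrow> 'f wqsym \<Rightarrow> 'f wqsym" where
  "qprod q F G u = (if packed u then
     (\<Sum>k\<in>{0..length u}. F (pack (take k u)) * G (pack (drop k u)) *
        q powi (int (sinv u) - int (sinv (pack (take k u))) - int (sinv (pack (drop k u)))))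
   else 0)"

definition Stilde :: "nat \<Rightarrow> 'f::field wqsym" where
  "Stilde m u = (if packed u \<and> length u = m \<and> sorted u then 1 else 0)"

definition Sprod :: "'f::field \<Rightarrow> nat list \<Rightarrow> 'f wqsym" where
  "Sprod q J = foldr (\<lambda>j acc. qprod q (Stilde j) acc) J wq_unit"

(* zeta : WQSym \<rightarrow> Sym, with Sym elements given by their coordinates in the basis Psi_I:
   zeta(M_u) = Psi_{WC(u)} *)
definition zeta :: "'f::field wqsym \<Rightarrow> nat list \<Rightarrow> 'f" where
  "zeta F I = (\<Sum>u\<in>{u. packed u \<and> length u = sum_list I \<and> WC u = I}. F u)"

(* S^J(q), as coordinates in the Psi basis: SJ q J I = C_I^J(q) *)
definition SJ :: "'f::field \<Rightarrow> nat list \<Rightarrow> nat list \<Rightarrow> 'f" where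
  "SJ q J = zeta (Sprod q J)"

definition qX :: "'k::field poly fract" where
  "qX = Fract [:0, 1:] 1"

(* matrices as lists of rows, each of length l (number of columns);
   w(M): columns left to right, each column top to bottom, row index i (1-based) repeated m_ij times *)
definition word_of_matrix :: "nat \<Rightarrow> nat list list \<Rightarrow> nat list" where
  "word_of_matrix l M = concat (map (\<lambda>j. concat (map (\<lambda>i. replicate (M ! i ! j) (Suc i)) [0..<length M])) [0..<l])"

definition matrix_set :: "nat list \<Rightarrow> nat list \<Rightarrow> nat list list set" where
  "matrix_set I J = {M. (\<forall>row\<in>set M. length row = length J \<and> (\<exists>x\<in>set row. x \<noteq> 0))
      \<and> (\<forall>j<length J. (\<Sum>i<length M. M ! i ! j) = J ! j)
      \<and> WC (word_of_matrix (length J) M) = I}"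

end

theory Submission imports Defs "HOL-Library.Multiset" begin


lemma sorted_map_strict:
  assumes "\<forall>x\<in>set xs. \<forall>y\<in>set xs. x < y \<longrightarrow> f x < (f y :: nat)"
  shows "sorted (map f xs) \<longleftrightarrow> sorted (xs :: nat list)"
  using assms
proof (induction xs)
  case Nil then show ?case by simp
next
  case (Cons a xs)
  have "(\<forall>y\<in>set xs. f a \<le> f y) \<longleftrightarrow> (\<forall>y\<in>set xs. a \<le> y)"
  proof
    assume h: "\<forall>y\<in>set xs. f a \<le> f y"
    show "\<forall>y\<in>set xs. a \<le> y"
    proof
      fix y assume y: "y \<in> set xs"
      show "a \<le> y"
      proof (rule ccontr)
        assume "\<not> a \<le> y"
        then have "y < a" by simp
        then have "f y < f a" using Cons.prems y by simp
        then show False using h y by fastforce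
      qed
    qed
  next
    assume h: "\<forall>y\<in>set xs. a \<le> y"
    show "\<forall>y\<in>set xs. f a \<le> f y"
    proof
      fix y assume y: "y \<in> set xs"
      show "f a \<le> f y"
      proof (cases "a = y")
        case False
        then have "a < y" using h y by fastforce
        then show ?thesis using Cons.prems y by fastforce
      qed simp
    qed
  qed
  then show ?case using Cons by simp
qed

definition rk :: "nat list \<Rightarrow> nat \<Rightarrow> nat" where
  "rk v x = card {y \<in> set v. y \<le> x}"

lemma pack_rk: "pack v = map (rk v) v" by (simp add: pack_def rk_def)

lemma rk_strict: "x \<in> set v \<Longrightarrow> y \<in> set v \<Longrightarrow> x < y \<Longrightarrow> rk v x < rk v y"
  unfolding rk_def
proof (rule psubset_card_mono)
  assume a: "x \<in> set v" "y \<in> set v" "x < y"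
  show "finite {z \<in> set v. z \<le> y}" by auto
  have "y \<notin> {z \<in> set v. z \<le> x}" using a by auto
  moreover have "y \<in> {z \<in> set v. z \<le> y}" using a by auto
  moreover have "{z \<in> set v. z \<le> x} \<subseteq> {z \<in> set v. z \<le> y}" using a by auto
  ultimately show "{z \<in> set v. z \<le> x} \<subset> {z \<in> set v. z \<le> y}" by blast
qed

lemma rk_strict_sub: "set w \<subseteq> set v \<Longrightarrow> \<forall>x\<in>set w. \<forall>y\<in>set w. x < y \<longrightarrow> rk v x < rk v y"
  using rk_strict by blast

lemma sorted_pack: "sorted (pack v) \<longleftrightarrow> sorted v"
  unfolding pack_rk by (rule sorted_map_strict) (use rk_strict in blast)

lemma packed_pack: "packed (pack v)"
proof -
  let ?S = "set v"
  have inj: "inj_on (rk v) ?S"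
    by (metis inj_onI linorder_neqE_nat rk_strict less_irrefl)
  have sub: "rk v ` ?S \<subseteq> {1..card ?S}"
  proof
    fix z assume "z \<in> rk v ` ?S"
    then obtain x where x: "x \<in> ?S" "z = rk v x" by auto
    have "{y \<in> ?S. y \<le> x} \<noteq> {}" using x by auto
    moreover have "finite {y \<in> ?S. y \<le> x}" by auto
    ultimately have "rk v x \<ge> 1" unfolding rk_def by (simp add: Suc_leI card_gt_0_iff)
    moreover have "rk v x \<le> card ?S" unfolding rk_def by (rule card_mono) auto
    ultimately show "z \<in> {1..card ?S}" using x by auto
  qed
  have c: "card (rk v ` ?S) = card ?S" using inj by (simp add: card_image)
  have eq: "rk v ` ?S = {1..card ?S}"
    by (rule card_subset_eq) (use sub c in auto)
  show ?thesis unfolding packed_def pack_rk using eq c by simp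
qed

lemma sinv_sorted: "sorted w \<Longrightarrow> sinv w = 0"
proof -
  assume s: "sorted w"
  have "{(i, j). i < j \<and> j < length w \<and> w ! i > w ! j \<and> w ! j \<notin> set (drop (Suc j) w)} = {}"
    using s by (auto simp: sorted_iff_nth_mono leD)
  then show ?thesis unfolding sinv_def by (metis card.empty)
qed




lemma qX_nz: "(qX :: 'k::field poly fract) \<noteq> 0"
  unfolding qX_def Zero_fract_def by (simp add: eq_fract)

fun PJ :: "nat list \<Rightarrow> nat list \<Rightarrow> bool" where
  "PJ [] u = (u = [])"
| "PJ (j # J) u = (j \<le> length u \<and> sorted (take j u) \<and> PJ J (drop j u))"

lemma PJ_length: "PJ J u \<Longrightarrow> length u = sum_list J"
  by (induction J arbitrary: u) force+

lemma PJ_map: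
  assumes "\<forall>x\<in>set u. \<forall>y\<in>set u. x < y \<longrightarrow> f x < (f y :: nat)"
  shows "PJ J (map f u) \<longleftrightarrow> PJ J u"
  using assms
proof (induction J arbitrary: u)
  case Nil then show ?case by simp
next
  case (Cons j J)
  have a: "\<forall>x\<in>set (drop j u). \<forall>y\<in>set (drop j u). x < y \<longrightarrow> f x < f y"
    using Cons.prems by (meson in_set_dropD)
  have b: "\<forall>x\<in>set (take j u). \<forall>y\<in>set (take j u). x < y \<longrightarrow> f x < f y"
    using Cons.prems by (meson in_set_takeD)
  show ?case using Cons.IH[OF a] sorted_map_strict[OF b]
    by (simp add: take_map drop_map)
qed

lemma PJ_pack: "PJ J (pack v) \<longleftrightarrow> PJ J v"
  unfolding pack_rk by (rule PJ_map) (use rk_strict in blast)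

lemma length_pack[simp]: "length (pack v) = length v" by (simp add: pack_def)

lemma Stilde_pack: "Stilde j (pack y) = (if length y = j \<and> sorted y then 1 else 0)"
  unfolding Stilde_def using packed_pack sorted_pack by simp

lemma Sprod_Cons: "Sprod q (j # J) = qprod q (Stilde j) (Sprod q J)"
  unfolding Sprod_def by simp

lemma Sprod_formula:
  fixes q :: "'f::field"
  assumes q: "q \<noteq> 0"
  shows "Sprod q J u = (if packed u \<and> PJ J u then q ^ sinv u else 0)"
proof (induction J arbitrary: u)
  case Nil
  show ?case unfolding Sprod_def wq_unit_def by (auto simp: packed_def sinv_def)
next
  case (Cons j J)
  show ?case
  proof (cases "packed u")
    case False
    then show ?thesis by (simp add: Sprod_Cons qprod_def)
  next
    case pk: True
    let ?T = "\<lambda>k. Stilde j (pack (take k u)) * Sprod q J (pack (drop k u)) *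
        q powi (int (sinv u) - int (sinv (pack (take k u))) - int (sinv (pack (drop k u))))"
    have e: "Sprod q (j # J) u = (\<Sum>k\<in>{0..length u}. ?T k)"
      using pk by (simp add: Sprod_Cons qprod_def)
    show ?thesis
    proof (cases "j \<le> length u")
      case False
      have z0: "?T k = 0" if "k \<in> {0..length u}" for k
        using that False by (simp add: Stilde_pack)
      have "(\<Sum>k\<in>{0..length u}. ?T k) = 0" by (rule sum.neutral) (use z0 in blast)
      then show ?thesis using e False by simp
    next
      case True
      have z: "?T k = 0" if "k \<in> {0..length u}" "k \<noteq> j" for k
        using that by (simp add: Stilde_pack)
      have r1: "(\<Sum>k\<in>{0..length u}. ?T k) = ?T j + (\<Sum>k\<in>{0..length u}-{j}. ?T k)"
        by (rule sum.remove) (use True in auto)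
      have r2: "(\<Sum>k\<in>{0..length u}-{j}. ?T k) = 0" by (rule sum.neutral) (use z in blast)
      have "(\<Sum>k\<in>{0..length u}. ?T k) = ?T j" using r1 r2 by simp
      also have "?T j = (if sorted (take j u) \<and> PJ J (drop j u) then q ^ sinv u else 0)"
      proof (cases "sorted (take j u) \<and> PJ J (drop j u)")
        case c: True
        have s0: "sinv (pack (take j u)) = 0" using c sinv_sorted sorted_pack by blast
        have "?T j = q ^ sinv (pack (drop j u)) *
             q powi (int (sinv u) - int (sinv (pack (drop j u))))"
          using c True s0 by (simp add: Stilde_pack Cons.IH packed_pack PJ_pack)
        also have "\<dots> = q powi (int (sinv (pack (drop j u))) + (int (sinv u) - int (sinv (pack (drop j u)))))"
          using power_int_add[of q "int (sinv (pack (drop j u)))" "int (sinv u) - int (sinv (pack (drop j u)))"] q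
          by (metis power_int_of_nat)
        also have "\<dots> = q ^ sinv u" by simp
        finally show ?thesis using c by simp
      next
        case c: False
        then show ?thesis using True by (auto simp: Stilde_pack Cons.IH packed_pack PJ_pack)
      qed
      finally show ?thesis using e pk True by simp
    qed
  qed
qed




definition R :: "(nat \<Rightarrow> nat) \<Rightarrow> nat \<Rightarrow> nat list" where
  "R g r = concat (map (\<lambda>i. replicate (g i) (Suc i)) [0..<r])"

lemma R_Suc: "R g (Suc r) = R g r @ replicate (g r) (Suc r)"
  by (simp add: R_def)

lemma R_count: "count (mset (R g r)) x = (if 1 \<le> x \<and> x \<le> r then g (x - 1) else 0)"
proof (induction r)
  case 0 then show ?case by (simp add: R_def)
next
  case (Suc r) then show ?case by (auto simp: R_Suc)
qed


lemma R_set: "x \<in> set (R g r) \<longleftrightarrow> 1 \<le> x \<and> x \<le> r \<and> g (x - 1) \<noteq> 0"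
proof -
  have "x \<in> set (R g r) \<longleftrightarrow> count (mset (R g r)) x \<noteq> 0" by (simp add: count_mset_0_iff)
  then show ?thesis unfolding R_count by (cases "1 \<le> x \<and> x \<le> r") auto
qed

lemma R_sorted: "sorted (R g r)"
proof (induction r)
  case 0 then show ?case by (simp add: R_def)
next
  case (Suc r)
  have "\<forall>x\<in>set (R g r). x \<le> Suc r" using R_set by auto
  then show ?case using Suc by (auto simp: R_Suc sorted_append)
qed

lemma R_length: "length (R g r) = (\<Sum>i<r. g i)"
proof (induction r)
  case 0 then show ?case by (simp add: R_def)
next
  case (Suc r) then show ?case by (simp add: R_Suc)
qed


definition col :: "nat list list \<Rightarrow> nat \<Rightarrow> nat list" where
  "col M j = R (\<lambda>i. M ! i ! j) (length M)"

lemma word_col: "word_of_matrix l M = concat (map (col M) [0..<l])"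
  unfolding word_of_matrix_def col_def R_def by simp

fun blocks :: "nat list \<Rightarrow> nat list \<Rightarrow> nat list list" where
  "blocks [] u = []"
| "blocks (j # J) u = take j u # blocks J (drop j u)"

lemma blocks_props:
  "PJ J u \<Longrightarrow> concat (blocks J u) = u \<and> length (blocks J u) = length J \<and>
     (\<forall>j<length J. length (blocks J u ! j) = J ! j \<and> sorted (blocks J u ! j))"
proof (induction J arbitrary: u)
  case Nil then show ?case by simp
next
  case (Cons a J)
  have p: "a \<le> length u" "sorted (take a u)" "PJ J (drop a u)" using Cons.prems by auto
  note ih = Cons.IH[OF p(3)]
  have "\<forall>j<length (a # J). length (blocks (a # J) u ! j) = (a # J) ! j \<and> sorted (blocks (a # J) u ! j)"
  proof (intro allI impI)
    fix j assume j: "j < length (a # J)"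
    show "length (blocks (a # J) u ! j) = (a # J) ! j \<and> sorted (blocks (a # J) u ! j)"
    proof (cases j)
      case 0 then show ?thesis using p by simp
    next
      case (Suc k) then show ?thesis using ih j by simp
    qed
  qed
  then show ?case using ih by simp
qed

lemma concat_PJ:
  "length cs = length J \<Longrightarrow> (\<forall>j<length J. length (cs ! j) = J ! j \<and> sorted (cs ! j))
    \<Longrightarrow> PJ J (concat cs) \<and> blocks J (concat cs) = cs"
proof (induction J arbitrary: cs)
  case Nil then show ?case by simp
next
  case (Cons a J)
  then obtain c cs' where cs: "cs = c # cs'" by (cases cs) auto
  have h: "\<forall>j<length J. length (cs' ! j) = J ! j \<and> sorted (cs' ! j)"
  proof (intro allI impI)
    fix j assume "j < length J"
    then have "Suc j < length (a # J)" by simp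
    then show "length (cs' ! j) = J ! j \<and> sorted (cs' ! j)"
      using Cons.prems(2) cs by (metis nth_Cons_Suc)
  qed
  have l: "length cs' = length J" using Cons.prems cs by simp
  have c: "length c = a" "sorted c" using Cons.prems(2)[rule_format, of 0] cs by simp_all
  show ?case using Cons.IH[OF l h] c cs by simp
qed




lemma col_props:
  assumes M: "M \<in> matrix_set I J"
  shows "length (map (col M) [0..<length J]) = length J"
    and "\<forall>j<length J. length (map (col M) [0..<length J] ! j) = J ! j \<and> sorted (map (col M) [0..<length J] ! j)"
proof -
  show "length (map (col M) [0..<length J]) = length J" by simp
  have cs: "\<forall>j<length J. (\<Sum>i<length M. M ! i ! j) = J ! j" using M by (simp add: matrix_set_def)
  show "\<forall>j<length J. length (map (col M) [0..<length J] ! j) = J ! j \<and> sorted (map (col M) [0..<length J] ! j)"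
    using cs by (simp add: col_def R_length R_sorted)
qed

lemma word_PJ_blocks:
  assumes M: "M \<in> matrix_set I J"
  shows "PJ J (word_of_matrix (length J) M) \<and>
         blocks J (word_of_matrix (length J) M) = map (col M) [0..<length J]"
  unfolding word_col using concat_PJ[OF col_props[OF M]] .

lemma word_set:
  assumes M: "M \<in> matrix_set I J"
  shows "set (word_of_matrix (length J) M) = {1..length M}"
proof
  show "set (word_of_matrix (length J) M) \<subseteq> {1..length M}"
    unfolding word_col col_def by (auto simp: R_set)
next
  show "{1..length M} \<subseteq> set (word_of_matrix (length J) M)"
  proof
    fix x assume x: "x \<in> {1..length M}"
    then have "M ! (x - 1) \<in> set M" by auto
    then have r: "length (M ! (x - 1)) = length J" "\<exists>y\<in>set (M ! (x - 1)). y \<noteq> 0"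
      using M by (auto simp: matrix_set_def)
    then obtain y where y: "y \<in> set (M ! (x - 1))" "y \<noteq> 0" by blast
    then obtain j where "j < length (M ! (x - 1))" "M ! (x - 1) ! j = y"
      by (auto simp: in_set_conv_nth)
    then have j: "j < length J" "M ! (x - 1) ! j \<noteq> 0" using r(1) y by auto
    then have "x \<in> set (col M j)" using x by (simp add: col_def R_set)
    then show "x \<in> set (word_of_matrix (length J) M)" using j unfolding word_col by auto
  qed
qed

definition W :: "nat list \<Rightarrow> nat list \<Rightarrow> nat list set" where
  "W I J = {u. packed u \<and> length u = sum_list I \<and> WC u = I \<and> PJ J u}"

lemma count_col: "i < length M \<Longrightarrow> count (mset (col M j)) (Suc i) = M ! i ! j"
  by (simp add: col_def R_count)

lemma inj_word: "inj_on (word_of_matrix (length J)) (matrix_set I J)"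
proof (rule inj_onI)
  fix M M' assume M: "M \<in> matrix_set I J" and M': "M' \<in> matrix_set I J"
    and eq: "word_of_matrix (length J) M = word_of_matrix (length J) M'"
  have "map (col M) [0..<length J] = map (col M') [0..<length J]"
    using word_PJ_blocks[OF M] word_PJ_blocks[OF M'] eq by metis
  then have ceq: "col M j = col M' j" if "j < length J" for j
    using that by (simp add: map_eq_conv)
  have c1: "card (set (word_of_matrix (length J) M)) = length M" using word_set[OF M] by simp
  have c2: "card (set (word_of_matrix (length J) M')) = length M'" using word_set[OF M'] by simp
  have len: "length M = length M'" using c1 c2 eq by simp
  show "M = M'"
  proof (rule nth_equalityI)
    show "length M = length M'" by (rule len)
    fix i assume i: "i < length M"
    have "M ! i \<in> set M" "M' ! i \<in> set M'" using i len by auto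
    then have l: "length (M ! i) = length J" "length (M' ! i) = length J"
      using M M' by (auto simp: matrix_set_def)
    show "M ! i = M' ! i"
    proof (rule nth_equalityI)
      show "length (M ! i) = length (M' ! i)" using l by simp
      fix j assume j: "j < length (M ! i)"
      show "M ! i ! j = M' ! i ! j"
        using count_col[OF i, of j] count_col[of i M' j] i len ceq[of j] j l by simp
    qed
  qed
qed

lemma word_in_W:
  assumes M: "M \<in> matrix_set I J" and s: "sum_list I = sum_list J"
  shows "word_of_matrix (length J) M \<in> W I J"
proof -
  let ?w = "word_of_matrix (length J) M"
  have p: "PJ J ?w" using word_PJ_blocks[OF M] by simp
  have "packed ?w" using word_set[OF M] by (simp add: packed_def)
  moreover have "length ?w = sum_list I" using PJ_length[OF p] s by simp
  moreover have "WC ?w = I" using M by (simp add: matrix_set_def)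
  ultimately show ?thesis using p by (simp add: W_def)
qed

lemma sorted_mset_eq: "sorted xs \<Longrightarrow> sorted ys \<Longrightarrow> mset xs = mset ys \<Longrightarrow> xs = (ys :: nat list)"
proof -
  assume a: "sorted xs" "sorted ys" "mset xs = mset ys"
  have "sort ys = xs" by (rule properties_for_sort) (use a in auto)
  moreover have "sort ys = ys" using a(2) by (rule sorted_sort_id)
  ultimately show ?thesis by simp
qed

lemma W_in_image:
  assumes u: "u \<in> W I J"
  shows "u \<in> word_of_matrix (length J) ` matrix_set I J"
proof -
  have pk: "packed u" and p: "PJ J u" and wc: "WC u = I" using u by (auto simp: W_def)
  define r where "r = card (set u)"
  have su: "set u = {1..r}" using pk by (simp add: packed_def r_def)
  define bs where "bs = blocks J u"
  have bp: "concat bs = u" "length bs = length J"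
    "\<forall>j<length J. length (bs ! j) = J ! j \<and> sorted (bs ! j)"
    using blocks_props[OF p] by (simp_all add: bs_def)
  define l where "l = length J"
  define M where "M = map (\<lambda>i. map (\<lambda>j. count (mset (bs ! j)) (Suc i)) [0..<l]) [0..<r]"
  have lM: "length M = r" by (simp add: M_def)
  have Mij: "M ! i ! j = count (mset (bs ! j)) (Suc i)" if "i < r" "j < l" for i j
    using that by (simp add: M_def)
  have bsub: "set (bs ! j) \<subseteq> {1..r}" if "j < l" for j
  proof -
    have "bs ! j \<in> set bs" using that bp(2) l_def by simp
    then have "set (bs ! j) \<subseteq> set (concat bs)" by auto
    then show ?thesis using bp(1) su by simp
  qed
  have colM: "col M j = bs ! j" if j: "j < l" for j
  proof (rule sorted_mset_eq)
    show "sorted (col M j)" by (simp add: col_def R_sorted)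
    show "sorted (bs ! j)" using bp(3) j l_def by simp
    show "mset (col M j) = mset (bs ! j)"
    proof (rule multiset_eqI)
      fix x
      show "count (mset (col M j)) x = count (mset (bs ! j)) x"
      proof (cases "1 \<le> x \<and> x \<le> r")
        case True
        then have "x = Suc (x - 1)" "x - 1 < r" by auto
        then show ?thesis using Mij[of "x - 1" j] j by (simp add: col_def R_count lM)
      next
        case False
        then have "x \<notin> set (bs ! j)" using bsub[OF j] by auto
        then have "count (mset (bs ! j)) x = 0" by (simp add: count_mset_0_iff)
        moreover have "count (mset (col M j)) x = 0"
          unfolding col_def R_count by (rule if_not_P) (use False lM in simp)
        ultimately show ?thesis by linarith
      qed
    qed
  qed
  have wM: "word_of_matrix (length J) M = u"
  proof -
    have "map (col M) [0..<l] = map ((!) bs) [0..<length bs]"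
      using colM bp(2) l_def by simp
    then show ?thesis unfolding word_col using bp(1) l_def by (simp add: map_nth)
  qed
  have "M \<in> matrix_set I J"
    unfolding matrix_set_def
  proof (intro CollectI conjI ballI allI impI)
    fix row assume row: "row \<in> set M"
    then obtain i where i0: "i < length M" "M ! i = row" by (auto simp: in_set_conv_nth)
    then have i: "i < r" "row = M ! i" using lM by auto
    show "length row = length J" using i by (simp add: M_def l_def)
    have "Suc i \<in> set (concat bs)" using i su bp(1) by auto
    then obtain b where b: "b \<in> set bs" "Suc i \<in> set b" by auto
    then obtain j where j0: "j < length bs" "bs ! j = b" by (auto simp: in_set_conv_nth)
    then have j: "j < l" "b = bs ! j" using bp(2) l_def by auto
    have "M ! i ! j \<noteq> 0" using Mij[OF i(1) j(1)] b j by simp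
    moreover have "j < length row" using i j by (simp add: M_def)
    ultimately have "row ! j \<in> set row" "row ! j \<noteq> 0" using i by auto
    then show "\<exists>x\<in>set row. x \<noteq> 0" by blast
  next
    fix j assume j: "j < length J"
    have "(\<Sum>i<length M. M ! i ! j) = length (col M j)" by (simp add: col_def R_length)
    also have "\<dots> = J ! j" using colM[of j] j bp(3) l_def by simp
    finally show "(\<Sum>i<length M. M ! i ! j) = J ! j" .
  next
    show "WC (word_of_matrix (length J) M) = I" using wM wc by simp
  qed
  then show ?thesis using wM by (intro image_eqI[where x=M]) simp_all
qed

lemma bij_word:
  assumes "sum_list I = sum_list J"
  shows "bij_betw (word_of_matrix (length J)) (matrix_set I J) (W I J)"
  unfolding bij_betw_def
proof (intro conjI)
  show "inj_on (word_of_matrix (length J)) (matrix_set I J)" by (rule inj_word)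
  show "word_of_matrix (length J) ` matrix_set I J = W I J"
  proof
    show "word_of_matrix (length J) ` matrix_set I J \<subseteq> W I J"
      using word_in_W[OF _ assms] by blast
    show "W I J \<subseteq> word_of_matrix (length J) ` matrix_set I J"
      using W_in_image by blast
  qed
qed

lemma finite_U: "finite {u. packed u \<and> length u = n \<and> P u}"
proof (rule finite_subset)
  show "{u. packed u \<and> length u = n \<and> P u} \<subseteq> {xs. set xs \<subseteq> {0..n} \<and> length xs = n}"
  proof (safe)
    fix u x assume "packed u" "x \<in> set u"
    then have "x \<le> card (set u)" unfolding packed_def by (metis atLeastAtMost_iff)
    also have "\<dots> \<le> length u" by (rule card_length)
    finally show "x \<in> {0..length u}" by simp
  qed
  show "finite {xs. set xs \<subseteq> {0..n} \<and> length xs = n}" by (rule finite_lists_length_eq) simp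
qed

theorem mainTheorem8:
  fixes n :: nat and I J :: "nat list"
  assumes "is_composition n I" and "is_composition n J"
  shows "SJ (qX :: 'k::field_char_0 poly fract) J I
         = (\<Sum>M\<in>matrix_set I J. qX ^ sinv (word_of_matrix (length J) M))"
proof -
  have s: "sum_list I = sum_list J" using assms by (simp add: is_composition_def)
  let ?U = "{u. packed u \<and> length u = sum_list I \<and> WC u = I}"
  have "SJ (qX :: 'k poly fract) J I = (\<Sum>u\<in>?U. Sprod qX J u)"
    by (simp add: SJ_def zeta_def)
  also have "\<dots> = (\<Sum>u\<in>?U. if PJ J u then qX ^ sinv u else 0)"
    by (rule sum.cong) (auto simp: Sprod_formula[OF qX_nz])
  also have "\<dots> = (\<Sum>u\<in>{u\<in>?U. PJ J u}. qX ^ sinv u)"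
    by (rule sum.inter_filter[symmetric]) (rule finite_U)
  also have "{u\<in>?U. PJ J u} = W I J" by (auto simp: W_def)
  also have "(\<Sum>u\<in>W I J. (qX :: 'k poly fract) ^ sinv u)
      = (\<Sum>M\<in>matrix_set I J. qX ^ sinv (word_of_matrix (length J) M))"
    by (rule sum.reindex_bij_betw[symmetric]) (rule bij_word[OF s])
  finally show ?thesis .
qed


end
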